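(* Let $X$ and $Y$ be Hausdorff spaces such that $X\times Y$ is normal. Then $(C(X,Y),\tau_\Gamma)$ is a regular space.
   Context: For topological spaces $X,Y$, $C(X,Y)$ denotes the set of continuous maps $X\to Y$; each $f\in C(X,Y)$ is identified with its graph $\{(x,f(x)):x\in X\}\subset X\times Y$. For $G$ open in $X\times Y$ let $F_G=\{f\in C(X,Y): f\subset G\}$. The graph topology $\tau_\Gamma$ on $C(X,Y)$ is the topology having the sets $F_G$ ($G$ open in $X\times Y$) as a base. *)

theory Defs
  imports "HOL-Analysis.Analysis"
begin

definition graph_on :: "'a topology \<Rightarrow> ('a \<Rightarrow> 'b) \<Rightarrow> ('a \<times> 'b) set" where
  "graph_on X f = {(x, f x) | x. x \<in> topspace X}"

text \<open>C(X,Y): continuous maps X to Y, each identified with its graph.\<close>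
definition cmaps :: "'a topology \<Rightarrow> 'b topology \<Rightarrow> ('a \<times> 'b) set set" where
  "cmaps X Y = {graph_on X f | f. continuous_map X Y f}"

definition graph_basic :: "'a topology \<Rightarrow> 'b topology \<Rightarrow> ('a \<times> 'b) set \<Rightarrow> ('a \<times> 'b) set set" where
  "graph_basic X Y G = {g \<in> cmaps X Y. g \<subseteq> G}"

definition graph_topology :: "'a topology \<Rightarrow> 'b topology \<Rightarrow> ('a \<times> 'b) set topology" where
  "graph_topology X Y =
     topology_generated_by {graph_basic X Y G | G. openin (prod_topology X Y) G}"

end

theory Submission
  imports Defs
begin

lemma graph_closed:
  assumes "Hausdorff_space Y" "continuous_map X Y f"
  shows "closedin (prod_topology X Y) (graph_on X f)"
proof -
  have c: "continuous_map (prod_topology X Y) Y (f \<circ> fst)"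
    by (rule continuous_map_compose[OF continuous_map_fst assms(2)])
  have "closedin (prod_topology X Y) {p \<in> topspace (prod_topology X Y). (f \<circ> fst) p = snd p}"
    by (rule closedin_continuous_maps_eq[OF assms(1) c continuous_map_snd])
  moreover have "{p \<in> topspace (prod_topology X Y). (f \<circ> fst) p = snd p} = graph_on X f"
    using assms(2) by (auto simp: graph_on_def continuous_map_def)
  ultimately show ?thesis by simp
qed

lemma graph_sub:
  assumes "continuous_map X Y f"
  shows "graph_on X f \<subseteq> topspace (prod_topology X Y)"
  using assms by (auto simp: graph_on_def continuous_map_def)

lemma topspace_gt: "topspace (graph_topology X Y) = cmaps X Y"
proof -
  have "graph_basic X Y (topspace (prod_topology X Y)) = cmaps X Y"
  proof
    show "cmaps X Y \<subseteq> graph_basic X Y (topspace (prod_topology X Y))"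
    proof
      fix g assume "g \<in> cmaps X Y"
      then obtain f where "g = graph_on X f" "continuous_map X Y f" by (auto simp: cmaps_def)
      then show "g \<in> graph_basic X Y (topspace (prod_topology X Y))"
        using graph_sub \<open>g \<in> cmaps X Y\<close> by (simp add: graph_basic_def)
    qed
  qed (auto simp: graph_basic_def)
  then have "cmaps X Y \<in> {graph_basic X Y G | G. openin (prod_topology X Y) G}"
    by (metis (mono_tags, lifting) mem_Collect_eq openin_topspace)
  moreover have "\<And>S. S \<in> {graph_basic X Y G | G. openin (prod_topology X Y) G} \<Longrightarrow> S \<subseteq> cmaps X Y"
    unfolding graph_basic_def by blast
  ultimately show ?thesis
    unfolding graph_topology_def topology_generated_by_topspace by blast
qed

lemma basic_open:
  "openin (prod_topology X Y) G \<Longrightarrow> openin (graph_topology X Y) (graph_basic X Y G)"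
  unfolding graph_topology_def by (metis (mono_tags, lifting) mem_Collect_eq topology_generated_by_Basis)

lemma base_aux:
  assumes "generate_topology_on {graph_basic X Y G | G. openin (prod_topology X Y) G} W"
  shows "\<forall>f\<in>W. \<exists>G. openin (prod_topology X Y) G \<and> f \<in> graph_basic X Y G \<and> graph_basic X Y G \<subseteq> W"
  using assms
proof (induction rule: generate_topology_on.induct)
  case Empty
  then show ?case by simp
next
  case (Int a b)
  show ?case
  proof
    fix f assume f: "f \<in> a \<inter> b"
    obtain G1 where 1: "openin (prod_topology X Y) G1" "f \<in> graph_basic X Y G1" "graph_basic X Y G1 \<subseteq> a"
      using Int.IH(1) f by (meson IntD1)
    obtain G2 where 2: "openin (prod_topology X Y) G2" "f \<in> graph_basic X Y G2" "graph_basic X Y G2 \<subseteq> b"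
      using Int.IH(2) f by (meson IntD2)
    have "openin (prod_topology X Y) (G1 \<inter> G2)" using 1 2 by (simp add: openin_Int)
    moreover have "graph_basic X Y (G1 \<inter> G2) = graph_basic X Y G1 \<inter> graph_basic X Y G2"
      unfolding graph_basic_def by auto
    ultimately show "\<exists>G. openin (prod_topology X Y) G \<and> f \<in> graph_basic X Y G \<and> graph_basic X Y G \<subseteq> a \<inter> b"
      using 1 2 by (metis Int_iff Int_mono)
  qed
next
  case (UN K)
  show ?case
  proof
    fix f assume "f \<in> \<Union>K"
    then obtain k where k: "k \<in> K" "f \<in> k" by auto
    then obtain G where "openin (prod_topology X Y) G" "f \<in> graph_basic X Y G" "graph_basic X Y G \<subseteq> k"
      using UN.IH by meson
    then show "\<exists>G. openin (prod_topology X Y) G \<and> f \<in> graph_basic X Y G \<and> graph_basic X Y G \<subseteq> \<Union>K"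
      using k(1) by (meson Union_upper order_trans)
  qed
next
  case (Basis s)
  then obtain G where "s = graph_basic X Y G" "openin (prod_topology X Y) G" by auto
  then show ?case by auto
qed

lemma base:
  assumes "openin (graph_topology X Y) W" "f \<in> W"
  shows "\<exists>G. openin (prod_topology X Y) G \<and> f \<in> graph_basic X Y G \<and> graph_basic X Y G \<subseteq> W"
  using base_aux assms openin_topology_generated_by unfolding graph_topology_def by blast

lemma part_reg:
  fixes X :: "'a topology" and Y :: "'b topology"
  assumes "Hausdorff_space X" and "Hausdorff_space Y"
    and "normal_space (prod_topology X Y)"
  shows "regular_space (graph_topology X Y)"
proof -
  let ?P = "prod_topology X Y"
  let ?T = "graph_topology X Y"
  have t1X: "t1_space X" and t1Y: "t1_space Y"
    using assms Hausdorff_imp_t1_space by auto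
  show ?thesis
    unfolding neighbourhood_base_of_closedin[symmetric] neighbourhood_base_of
  proof (intro allI impI)
    fix W f assume Wf: "openin ?T W \<and> f \<in> W"
    then obtain G where G: "openin ?P G" "f \<in> graph_basic X Y G" "graph_basic X Y G \<subseteq> W"
      using base[OF conjunct1[OF Wf] conjunct2[OF Wf]] by blast
    have fG: "f \<in> cmaps X Y" "f \<subseteq> G" using G(2) unfolding graph_basic_def by simp_all
    then obtain f0 where f0: "f = graph_on X f0" "continuous_map X Y f0"
      unfolding cmaps_def by blast
    have cf: "closedin ?P f" using graph_closed[OF assms(2) f0(2)] f0(1) by simp
    have nrm: "\<forall>S U. closedin ?P S \<and> openin ?P U \<and> S \<subseteq> U \<longrightarrow> (\<exists>V. openin ?P V \<and> S \<subseteq> V \<and> ?P closure_of V \<subseteq> U)"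
      using assms(3) by (simp only: normal_space_alt)
    obtain H where H: "openin ?P H" "f \<subseteq> H" "?P closure_of H \<subseteq> G"
      using nrm[rule_format, OF conjI[OF cf conjI[OF G(1) fG(2)]]] by blast
    have sub: "?T closure_of graph_basic X Y H \<subseteq> graph_basic X Y G"
    proof
      fix g assume gc: "g \<in> ?T closure_of graph_basic X Y H"
      then have "g \<in> cmaps X Y" using closure_of_subset_topspace[of ?T] topspace_gt[of X Y] by blast
      then obtain g0 where g0: "g = graph_on X g0" "continuous_map X Y g0"
        by (auto simp: cmaps_def)
      show "g \<in> graph_basic X Y G"
      proof (rule ccontr)
        assume "g \<notin> graph_basic X Y G"
        then obtain x where x: "x \<in> topspace X" "(x, g0 x) \<notin> G"
          using \<open>g \<in> cmaps X Y\<close> g0 by (auto simp: graph_basic_def graph_on_def)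
        then have xn: "(x, g0 x) \<notin> ?P closure_of H" using H(3) by blast
        define K where "K = ?P closure_of H \<inter> ({x} \<times> topspace Y)"
        have "closedin ?P ({x} \<times> topspace Y)"
        proof -
          have cx: "closedin X {x}" using t1X x(1) unfolding t1_space_closedin_singleton by blast
          show ?thesis using closedin_prod_Times_iff[of X Y "{x}" "topspace Y"] cx by simp
        qed
        then have "closedin ?P K" unfolding K_def by (simp add: closedin_Int)
        then have oK: "openin ?P (topspace ?P - K)" by (simp add: closedin_def)
        have "g \<in> graph_basic X Y (topspace ?P - K)"
        proof -
          have "g \<inter> K = {}"
          proof (rule ccontr)
            assume "g \<inter> K \<noteq> {}"
            then obtain p where p: "p \<in> g" "p \<in> K" by blast
            then obtain x' where "p = (x', g0 x')" using g0(1) unfolding graph_on_def by blast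
            moreover have "fst p = x" using p(2) unfolding K_def by auto
            ultimately have "p = (x, g0 x)" by simp
            then show False using p(2) xn unfolding K_def by blast
          qed
          then have "g \<subseteq> topspace ?P - K" using graph_sub[OF g0(2)] g0(1) by blast
          then show ?thesis using \<open>g \<in> cmaps X Y\<close> unfolding graph_basic_def by blast
        qed
        moreover have "graph_basic X Y H \<inter> graph_basic X Y (topspace ?P - K) = {}"
        proof (rule ccontr)
          assume "graph_basic X Y H \<inter> graph_basic X Y (topspace ?P - K) \<noteq> {}"
          then obtain h where h: "h \<in> cmaps X Y" "h \<subseteq> H" "h \<subseteq> topspace ?P - K"
            by (auto simp: graph_basic_def)
          then obtain h0 where h0: "h = graph_on X h0" "continuous_map X Y h0"
            by (auto simp: cmaps_def)
          have hx: "(x, h0 x) \<in> h" using h0(1) x(1) by (auto simp: graph_on_def)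
          have "h0 x \<in> topspace Y" using continuous_map_image_subset_topspace[OF h0(2)] x(1) by blast
          moreover have "(x, h0 x) \<in> ?P closure_of H"
            using hx h(2) closure_of_subset[OF openin_subset[OF H(1)]] by blast
          ultimately have "(x, h0 x) \<in> K" by (auto simp: K_def)
          then show False using hx h(3) by blast
        qed
        ultimately show False
          using gc basic_open[OF oK] unfolding in_closure_of by blast
      qed
    qed
    show "\<exists>U V. openin ?T U \<and> closedin ?T V \<and> f \<in> U \<and> U \<subseteq> V \<and> V \<subseteq> W"
    proof (intro exI conjI)
      show "openin ?T (graph_basic X Y H)" using basic_open[OF H(1)] .
      show "closedin ?T (?T closure_of graph_basic X Y H)" by simp
      show "f \<in> graph_basic X Y H" using G(2) H(2) by (auto simp: graph_basic_def)
      show "graph_basic X Y H \<subseteq> ?T closure_of graph_basic X Y H"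
        using closure_of_subset openin_subset[OF basic_open[OF H(1)]] by blast
      show "?T closure_of graph_basic X Y H \<subseteq> W" using sub G(3) by blast
    qed
  qed
qed

lemma part_t1:
  fixes X :: "'a topology" and Y :: "'b topology"
  assumes "Hausdorff_space X" and "Hausdorff_space Y"
    and "normal_space (prod_topology X Y)"
  shows "t1_space (graph_topology X Y)"
proof -
  let ?P = "prod_topology X Y"
  let ?T = "graph_topology X Y"
  have t1X: "t1_space X" and t1Y: "t1_space Y"
    using assms Hausdorff_imp_t1_space by auto
  show ?thesis
    unfolding t1_space_def topspace_gt
  proof (intro ballI impI)
    fix f g assume fg: "f \<in> cmaps X Y" "g \<in> cmaps X Y" "f \<noteq> g"
    then obtain f0 g0 where f0: "f = graph_on X f0" "continuous_map X Y f0"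
      and g0: "g = graph_on X g0" "continuous_map X Y g0"
      by (auto simp: cmaps_def)
    have "\<exists>x\<in>topspace X. f0 x \<noteq> g0 x"
    proof (rule ccontr)
      assume "\<not> (\<exists>x\<in>topspace X. f0 x \<noteq> g0 x)"
      then have "graph_on X f0 = graph_on X g0" unfolding graph_on_def by (metis (no_types, lifting))
      then show False using fg(3) f0(1) g0(1) by simp
    qed
    then obtain x where x: "x \<in> topspace X" "f0 x \<noteq> g0 x" by blast
    have gxY: "g0 x \<in> topspace Y" using continuous_map_image_subset_topspace[OF g0(2)] x(1) by blast
    have "closedin ?P ({x} \<times> {g0 x})"
    proof -
      have cx: "closedin X {x}" using t1X x(1) unfolding t1_space_closedin_singleton by blast
      have cy: "closedin Y {g0 x}" using t1Y gxY unfolding t1_space_closedin_singleton by blast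
      show ?thesis using closedin_prod_Times_iff[of X Y "{x}" "{g0 x}"] cx cy by blast
    qed
    then have oK: "openin ?P (topspace ?P - {x} \<times> {g0 x})" by (simp add: closedin_def)
    show "\<exists>U. openin ?T U \<and> f \<in> U \<and> g \<notin> U"
    proof (intro exI conjI)
      show "openin ?T (graph_basic X Y (topspace ?P - {x} \<times> {g0 x}))" using basic_open[OF oK] .
      show "f \<in> graph_basic X Y (topspace ?P - {x} \<times> {g0 x})"
      proof -
        have "(x, g0 x) \<notin> f" using f0(1) x(2) by (auto simp: graph_on_def)
        then show ?thesis using fg(1) graph_sub[OF f0(2)] f0(1) unfolding graph_basic_def by blast
      qed
      show "g \<notin> graph_basic X Y (topspace ?P - {x} \<times> {g0 x})"
      proof -
        have "(x, g0 x) \<in> g" using g0(1) x(1) by (auto simp: graph_on_def)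
        then show ?thesis unfolding graph_basic_def by blast
      qed
    qed
  qed
qed

theorem mainTheorem1:
  fixes X :: "'a topology" and Y :: "'b topology"
  assumes "Hausdorff_space X" and "Hausdorff_space Y"
    and "normal_space (prod_topology X Y)"
  shows "regular_space (graph_topology X Y) \<and> t1_space (graph_topology X Y)"
  using part_reg[OF assms] part_t1[OF assms] by blast

end
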